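(* Let $r\in\{2,3\}$, let $(\mathbf{a}_1,\mathbf{a}_2,\mathbf{a}_3)$ be $f$-tuples with entries in $\{0,\dots,p-1\}$ which are weakly generic, let $\tau$ be the corresponding non-principal-series tame type for $I_K$ and $(s_j)_{j=0}^{f-1}\in S_3^f$ an orientation of $(\mathbf{a}_1,\mathbf{a}_2,\mathbf{a}_3)$. For $0\le j\le f-1$ and $0\le i\le r-1$ define $s'_{j+if}=s_\tau^{\,i+1}\circ s_j\in S_3$, where $s_\tau=(23)$ if $r=2$ and $s_\tau=(123)$ if $r=3$. Then $(s'_{j'})_{j'=0}^{f'-1}\in S_3^{f'}$ is an orientation of $\tau'$.
   Context: $p>3$; $K=\mathbb{Q}_{p^f}$, $f'=fr$, $K'=\mathbb{Q}_{p^{f'}}$. $\omega_{f'}$ is a fundamental character of niveau $f'$ of $I_{K'}$ (viewed in $\mathcal{O}^\times$). For an $m$-tuple $\mathbf{b}=(b_i)_{i\in\mathbb{Z}/m}$ put $\mathbf{b}^{(j)}=\sum_{i=0}^{m-1}b_{-j+i}p^i$. The triple $(\mathbf{a}_1,\mathbf{a}_2,\mathbf{a}_3)$ is weakly generic if $3\le|a_{k,j}-a_{l,j}|\le p-4$ for all $k\ne l$, all $j$. The type $\tau$ is $\omega_{f'}^{-\mathbf{a}_1^{(0)}-p^f\mathbf{a}_1^{(0)}}\oplus\omega_{f'}^{-\mathbf{a}_2^{(0)}-p^f\mathbf{a}_3^{(0)}}\oplus\omega_{f'}^{-\mathbf{a}_3^{(0)}-p^f\mathbf{a}_2^{(0)}}$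 if $r=2$, and $\omega_{f'}^{-\mathbf{a}_1^{(0)}-p^f\mathbf{a}_2^{(0)}-p^{2f}\mathbf{a}_3^{(0)}}\oplus\omega_{f'}^{-\mathbf{a}_2^{(0)}-p^f\mathbf{a}_3^{(0)}-p^{2f}\mathbf{a}_1^{(0)}}\oplus\omega_{f'}^{-\mathbf{a}_3^{(0)}-p^f\mathbf{a}_1^{(0)}-p^{2f}\mathbf{a}_2^{(0)}}$ if $r=3$. Its restriction $\tau'$ to $I_{K'}$ is written uniquely as $\eta_1\oplus\eta_2\oplus\eta_3$ (in this order) with $\eta_k=\omega_{f'}^{-\mathbf{a}'^{(0)}_k}$ for $f'$-tuples $\mathbf{a}'_k$ with entries in $[0,p-1]$; an orientation of $\tau'$ means an orientation of $(\mathbf{a}'_1,\mathbf{a}'_2,\mathbf{a}'_3)$. An orientation of a triple of $m$-tuples $(\mathbf{b}_1,\mathbf{b}_2,\mathbf{b}_3)$ is $(t_j)\in S_3^m$ with $\mathbf{b}^{(j)}_{t_j(1)}\ge\mathbf{b}^{(j)}_{t_j(2)}\ge\mathbf{b}^{(j)}_{t_j(3)}$ for all $j$. Permutations compose right to left and $(123)$ is $1\mapsto2\mapsto3\mapsto1$. *)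

theory Defs
  imports Main "HOL-Combinatorics.Permutations" "HOL-Computational_Algebra.Primes"
begin

text \<open>An m-tuple indexed by Z/m is a function b :: nat => nat, only the values at
  0..m-1 matter; indices are read modulo m.
  tup_shift p m b j = b^(j) = sum_{i=0}^{m-1} b_{-j+i} p^i.\<close>
definition tup_shift :: "nat \<Rightarrow> nat \<Rightarrow> (nat \<Rightarrow> nat) \<Rightarrow> nat \<Rightarrow> nat" where
  "tup_shift p m b j = (\<Sum>i<m. b (nat ((int i - int j) mod int m)) * p ^ i)"

definition is_orientation ::
  "nat \<Rightarrow> nat \<Rightarrow> (nat \<Rightarrow> nat \<Rightarrow> nat) \<Rightarrow> (nat \<Rightarrow> nat \<Rightarrow> nat) \<Rightarrow> bool" where
  "is_orientation p m B t \<longleftrightarrow>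
     (\<forall>j<m. t j permutes {1,2,3} \<and>
        tup_shift p m (B (t j 1)) j \<ge> tup_shift p m (B (t j 2)) j \<and>
        tup_shift p m (B (t j 2)) j \<ge> tup_shift p m (B (t j 3)) j)"

definition weakly_generic :: "nat \<Rightarrow> nat \<Rightarrow> (nat \<Rightarrow> nat \<Rightarrow> nat) \<Rightarrow> bool" where
  "weakly_generic p f A \<longleftrightarrow>
     (\<forall>j<f. \<forall>k\<in>{1,2,3}. \<forall>l\<in>{1,2,3}. k \<noteq> l \<longrightarrow>
        3 \<le> \<bar>int (A k j) - int (A l j)\<bar> \<and> \<bar>int (A k j) - int (A l j)\<bar> \<le> int p - 4)"

definition perm23 :: "nat \<Rightarrow> nat" where
  "perm23 x = (if x = 2 then 3 else if x = 3 then 2 else x)"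

definition perm123 :: "nat \<Rightarrow> nat" where
  "perm123 x = (if x = 1 then 2 else if x = 2 then 3 else if x = 3 then 1 else x)"

definition s_tau :: "nat \<Rightarrow> nat \<Rightarrow> nat" where
  "s_tau r = (if r = 2 then perm23 else perm123)"

text \<open>Exponent E_k (so that the k-th summand of tau is omega_{f'}^{-E_k}).\<close>
definition tau_exp :: "nat \<Rightarrow> nat \<Rightarrow> nat \<Rightarrow> (nat \<Rightarrow> nat \<Rightarrow> nat) \<Rightarrow> nat \<Rightarrow> nat" where
  "tau_exp p f r A k =
    (let v = (\<lambda>k. tup_shift p f (A k) 0) in
     if r = 2 then
       (if k = 1 then v 1 + p ^ f * v 1
        else if k = 2 then v 2 + p ^ f * v 3
        else v 3 + p ^ f * v 2)
     else
       (if k = 1 then v 1 + p ^ f * v 2 + p ^ (2 * f) * v 3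
        else if k = 2 then v 2 + p ^ f * v 3 + p ^ (2 * f) * v 1
        else v 3 + p ^ f * v 1 + p ^ (2 * f) * v 2))"

text \<open>The f'-tuple a'_k with entries in [0,p-1] such that a'_k^(0) = E_k, i.e. eta_k =
  omega_{f'}^{-a'_k^(0)}: the base-p digits of E_k.\<close>
definition tau'_tuple :: "nat \<Rightarrow> nat \<Rightarrow> nat \<Rightarrow> (nat \<Rightarrow> nat \<Rightarrow> nat) \<Rightarrow> nat \<Rightarrow> nat \<Rightarrow> nat" where
  "tau'_tuple p f r A k i = (tau_exp p f r A k div p ^ i) mod p"

end

theory Submission
  imports Defs "HOL-Combinatorics.Cycles"
begin

lemma digits_bound:
  fixes d :: "nat \<Rightarrow> nat"
  assumes "\<And>i. i < n \<Longrightarrow> d i < p"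
  shows "(\<Sum>i<n. d i * p ^ i) < p ^ n"
  using assms
proof (induction n)
  case 0 then show ?case by simp
next
  case (Suc n)
  have "(\<Sum>i<n. d i * p ^ i) < p ^ n" using Suc by auto
  moreover have "d n + 1 \<le> p" using Suc.prems by fastforce
  hence "d n * p ^ n + p ^ n \<le> p * p ^ n"
    by (metis add_mult_distrib mult_1 mult_le_mono1)
  ultimately show ?case by simp
qed

lemma top_dom:
  fixes b c :: "nat \<Rightarrow> nat"
  assumes "\<And>i. i < Suc m \<Longrightarrow> b i < p" "\<And>i. i < Suc m \<Longrightarrow> c i < p"
    and "c m < b m"
  shows "(\<Sum>i<Suc m. c i * p ^ i) < (\<Sum>i<Suc m. b i * p ^ i)"
proof -
  have "(\<Sum>i<m. c i * p ^ i) < p ^ m" using assms(2) by (intro digits_bound) auto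
  moreover have "c m * p ^ m + p ^ m \<le> b m * p ^ m"
    using assms(3) by (metis Suc_leI add.commute mult_Suc mult_le_mono1)
  ultimately show ?thesis by simp
qed

lemma nat_mod_idx: "j < m \<Longrightarrow> i < m \<Longrightarrow> nat ((int i - int j) mod int m) < m"
  by (simp add: nat_less_iff)

lemma top_cmp:
  assumes "j < Suc m" "\<And>x. x < Suc m \<Longrightarrow> B1 x < p" "\<And>x. x < Suc m \<Longrightarrow> B2 x < p"
    and "B2 (m - j) < B1 (m - j)"
  shows "tup_shift p (Suc m) B2 j < tup_shift p (Suc m) B1 j"
proof -
  have e: "nat ((int m - int j) mod int (Suc m)) = m - j" using assms(1)
    by (simp add: of_nat_diff[symmetric] del: of_nat_diff)
  show ?thesis unfolding tup_shift_def
    apply (rule top_dom)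
    using assms nat_mod_idx[OF assms(1)] e by auto
qed

lemma digit_extract:
  fixes d :: "nat \<Rightarrow> nat"
  assumes "\<And>i. i < n \<Longrightarrow> d i < p" "i < n"
  shows "((\<Sum>m<n. d m * p ^ m) div p ^ i) mod p = d i"
  using assms
proof (induction n)
  case 0 then show ?case by simp
next
  case (Suc n)
  have p0: "p > 0" using Suc.prems by fastforce
  have S: "(\<Sum>m<Suc n. d m * p ^ m) = (\<Sum>m<n. d m * p ^ m) + d n * p ^ n" by simp
  show ?case
  proof (cases "i < n")
    case True
    have pw: "p ^ n = p ^ (n - i) * p ^ i" using True by (simp add: power_add[symmetric])
    have "(\<Sum>m<Suc n. d m * p ^ m) div p ^ i = (\<Sum>m<n. d m * p ^ m) div p ^ i + d n * p ^ (n - i)"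
      unfolding S pw using p0 by (simp add: mult.assoc[symmetric])
    moreover have "p ^ (n - i) = p * p ^ (n - i - 1)" using True
      by (metis Suc_diff_Suc power_Suc diff_Suc_1 zero_less_diff)
    ultimately have "(\<Sum>m<Suc n. d m * p ^ m) div p ^ i mod p = (\<Sum>m<n. d m * p ^ m) div p ^ i mod p"
      by (simp add: mult.left_commute)
    then show ?thesis using Suc True by auto
  next
    case False
    hence i: "i = n" using Suc by auto
    have "(\<Sum>m<n. d m * p ^ m) < p ^ n" using Suc.prems by (intro digits_bound) auto
    hence "(\<Sum>m<Suc n. d m * p ^ m) div p ^ i = d n" unfolding S i using p0
      by (simp add: div_add1_eq[of _ _ "p^n"] )
    then show ?thesis using Suc.prems i by simp
  qed
qed

lemma block_sum:
  fixes h :: "nat \<Rightarrow> nat \<Rightarrow> nat" and f :: nat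
  assumes "f \<ge> 1"
  shows "(\<Sum>m<q * f. h (m div f) (m mod f) * p ^ m) = (\<Sum>b<q. p ^ (b * f) * (\<Sum>i<f. h b i * p ^ i))"
proof (induction q)
  case 0 then show ?case by simp
next
  case (Suc q)
  have U: "{..<Suc q * f} = {..<q*f} \<union> {q*f..<q*f+f}" by auto
  have "(\<Sum>m\<in>{q*f..<q*f+f}. h (m div f) (m mod f) * p ^ m)
      = (\<Sum>i\<in>{0..<f}. h ((i + q*f) div f) ((i + q*f) mod f) * p ^ (i + q*f))"
    using sum.shift_bounds_nat_ivl[of "\<lambda>m. h (m div f) (m mod f) * p ^ m" 0 "q*f" f]
    by (simp add: add.commute)
  also have "\<dots> = (\<Sum>i<f. p ^ (q * f) * (h q i * p ^ i))"
    apply (rule sum.cong)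
    using assms by (auto simp: power_add atLeast0LessThan)
  finally have "(\<Sum>m\<in>{q*f..<q*f+f}. h (m div f) (m mod f) * p ^ m) = p ^ (q * f) * (\<Sum>i<f. h q i * p ^ i)"
    by (simp add: sum_distrib_left)
  then show ?case unfolding U
    by (subst sum.union_disjoint) (auto simp: Suc)
qed

definition blk :: "nat \<Rightarrow> nat \<Rightarrow> nat \<Rightarrow> nat" where
"blk r k b = (if r = 2 then (if k = 1 then 1 else if k = 2 then (if b = 0 then 2 else 3) else (if b = 0 then 3 else 2))
   else (if k=1 then (if b=0 then 1 else if b=1 then 2 else 3) else if k=2 then (if b=0 then 2 else if b=1 then 3 else 1)
   else (if b=0 then 3 else if b=1 then 1 else 2)))"

lemma blk_range: "blk r k b \<in> {1,2,3}" by (simp add: blk_def)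

lemma tup0: "tup_shift p f B 0 = (\<Sum>i<f. B i * p ^ i)"
  unfolding tup_shift_def by (rule sum.cong) (auto simp: nat_mod_as_int[symmetric] mod_less)

lemma tau_exp_expand:
  assumes "r \<in> {2,3}"
  shows "tau_exp p f r A k = (\<Sum>b<r. p ^ (b * f) * (\<Sum>i<f. A (blk r k b) i * p ^ i))"
  using assms unfolding tau_exp_def tup0 Let_def
  by (auto simp: blk_def numeral_eq_Suc mult.commute)

lemma tau_exp_sum:
  assumes "r \<in> {2,3}" "f \<ge> 1"
  shows "tau_exp p f r A k = (\<Sum>m<r * f. A (blk r k (m div f)) (m mod f) * p ^ m)"
  unfolding tau_exp_expand[OF assms(1)] using block_sum[OF assms(2), where h="\<lambda>b i. A (blk r k b) i" and q=r and p=p] by simp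

lemma tau'_digit:
  assumes "r \<in> {2,3}" "f \<ge> 1" "\<forall>k\<in>{1,2,3}. \<forall>j<f. A k j \<le> p - 1" "p > 0" "m < f * r"
  shows "tau'_tuple p f r A k m = A (blk r k (m div f)) (m mod f)"
  unfolding tau'_tuple_def tau_exp_sum[OF assms(1,2)]
proof (rule digit_extract)
  fix i assume "i < r * f"
  have "i mod f < f" using assms(2) by auto
  then show "A (blk r k (i div f)) (i mod f) < p" using assms(3,4) blk_range[of r k "i div f"]
    by fastforce
qed (use assms(5) in \<open>simp add: mult.commute\<close>)

lemma blk_inv:
  assumes "r \<in> {2,3}" "i < r" "x \<in> {1,2,3}"
  shows "blk r ((s_tau r ^^ (i + 1)) x) (r - 1 - i) = x"
proof -
  have "i = 0 \<or> i = 1 \<or> (i = 2 \<and> r = 3)" using assms(1,2) by auto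
  then show ?thesis using assms(1,3)
    by (auto simp: s_tau_def perm23_def perm123_def blk_def numeral_eq_Suc)
qed

lemma s_tau_permutes: "r \<in> {2,3} \<Longrightarrow> s_tau r permutes {1,2,3}"
proof -
  have a: "perm23 = Transposition.transpose 2 3"
    by (rule ext) (simp add: perm23_def transpose_def)
  have b: "perm123 = Transposition.transpose 1 2 \<circ> Transposition.transpose 2 3"
    by (rule ext) (simp add: perm123_def transpose_def)
  assume "r \<in> {2,3}"
  then show ?thesis unfolding s_tau_def a b
    by (auto intro!: permutes_compose permutes_swap_id)
qed

lemma idx_arith:
  fixes f r i j :: nat
  assumes "j < f" "i < r"
  shows "f * r - 1 - (j + i * f) = (r - 1 - i) * f + (f - 1 - j)"
proof -
  obtain d where r: "r = Suc i + d" using assms(2) less_iff_Suc_add by auto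
  show ?thesis unfolding r using assms(1) by (simp add: algebra_simps)
qed

lemma qm: "x < (f::nat) \<Longrightarrow> (q*f + x) div f = q \<and> (q*f + x) mod f = x"
  by simp

theorem proposition6p1:
  fixes p f r :: nat and A :: "nat \<Rightarrow> nat \<Rightarrow> nat"
    and s s' :: "nat \<Rightarrow> nat \<Rightarrow> nat"
  assumes "prime p" and "p > 3" and "f \<ge> 1"
    and "r \<in> {2, 3}"
    and "\<forall>k\<in>{1,2,3}. \<forall>j<f. A k j \<le> p - 1"
    and "weakly_generic p f A"
    and "is_orientation p f A s"
    and "\<forall>j<f. \<forall>i<r. s' (j + i * f) = (s_tau r ^^ (i + 1)) \<circ> s j"
  shows "is_orientation p (f * r) (tau'_tuple p f r A) s'"
  unfolding is_orientation_def
proof (intro allI impI)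
  fix j' assume j': "j' < f * r"
  define j where "j = j' mod f"
  define i where "i = j' div f"
  have jf: "j < f" using assms(3) j_def by auto
  have ir: "i < r" using j' unfolding i_def using assms(3) by (metis div_less_iff_less_mult less_le_trans mult.commute zero_less_one)
  have jj: "j' = j + i * f" unfolding i_def j_def by simp
  define \<sigma> where "\<sigma> = s_tau r ^^ (i + 1)"
  have s': "s' j' = \<sigma> \<circ> s j" using assms(8) jf ir jj \<sigma>_def by simp
  have sp: "s j permutes {1,2,3}" using assms(7) jf unfolding is_orientation_def by blast
  have \<sigma>p: "\<sigma> permutes {1,2,3}" unfolding \<sigma>_def
    by (rule permutes_funpow[OF s_tau_permutes[OF assms(4)]])
  have p0: "p > 0" using assms(2) by simp
  have fr: "f * r = Suc (f * r - 1)" using j' by simp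
  have rng: "s j x \<in> {1,2,3}" if "x \<in> {1,2,3}" for x
    using permutes_in_image[OF sp] that by blast
  have top: "tau'_tuple p f r A (\<sigma> y) (f * r - 1 - j') = A y (f - 1 - j)" if "y \<in> {1,2,3}" for y
  proof -
    have e: "f * r - 1 - j' = (r - 1 - i) * f + (f - 1 - j)" unfolding jj by (rule idx_arith[OF jf ir])
    have lt: "f * r - 1 - j' < f * r" using j' by simp
    have "(f * r - 1 - j') div f = r - 1 - i" "(f * r - 1 - j') mod f = f - 1 - j"
      unfolding e using qm[of "f - 1 - j" f "r - 1 - i"] jf by auto
    then show ?thesis using tau'_digit[OF assms(4,3,5) p0 lt] blk_inv[OF assms(4) ir that] \<sigma>_def
      by simp
  qed
  have dig: "tau'_tuple p f r A k x < p" for k x unfolding tau'_tuple_def using p0 by simp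
  have Adig: "A k x < p" if "k \<in> {1,2,3}" "x < f" for k x
    using assms(5) that p0 by fastforce
  have step: "tup_shift p (f * r) (tau'_tuple p f r A (\<sigma> (s j b))) j'
            \<le> tup_shift p (f * r) (tau'_tuple p f r A (\<sigma> (s j a))) j'"
    if ab: "tup_shift p f (A (s j b)) j \<le> tup_shift p f (A (s j a)) j" "a \<in> {1,2,3}" "b \<in> {1,2,3}" "a \<noteq> b"
    for a b
  proof -
    have ne: "s j a \<noteq> s j b" using sp ab(4) by (metis permutes_inj injD)
    have ra: "s j a \<in> {1,2,3}" "s j b \<in> {1,2,3}" using rng ab(2,3) by auto
    have f1: "f - 1 - j < f" using jf by simp
    have "3 \<le> \<bar>int (A (s j a) (f - 1 - j)) - int (A (s j b) (f - 1 - j))\<bar>"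
      using assms(6) ra ne f1 unfolding weakly_generic_def by blast
    hence dne: "A (s j a) (f - 1 - j) \<noteq> A (s j b) (f - 1 - j)" by auto
    have ff: "f = Suc (f - 1)" using assms(3) by simp
    have gt: "A (s j b) (f - 1 - j) < A (s j a) (f - 1 - j)"
    proof (rule ccontr)
      assume "\<not> ?thesis"
      hence "A (s j a) (f - 1 - j) < A (s j b) (f - 1 - j)" using dne by simp
      hence "tup_shift p (Suc (f - 1)) (A (s j a)) j < tup_shift p (Suc (f - 1)) (A (s j b)) j"
        by (intro top_cmp) (use jf Adig ra in auto)
      then show False using ab(1) ff by simp
    qed
    have "tup_shift p (Suc (f * r - 1)) (tau'_tuple p f r A (\<sigma> (s j b))) j'
         < tup_shift p (Suc (f * r - 1)) (tau'_tuple p f r A (\<sigma> (s j a))) j'"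
      by (rule top_cmp) (use j' dig gt top ra in auto)
    then show ?thesis using fr by simp
  qed
  have o1: "tup_shift p f (A (s j 2)) j \<le> tup_shift p f (A (s j 1)) j"
   and o2: "tup_shift p f (A (s j 3)) j \<le> tup_shift p f (A (s j 2)) j"
    using assms(7) jf unfolding is_orientation_def by auto
  show "s' j' permutes {1,2,3} \<and>
        tup_shift p (f * r) (tau'_tuple p f r A (s' j' 2)) j' \<le> tup_shift p (f * r) (tau'_tuple p f r A (s' j' 1)) j' \<and>
        tup_shift p (f * r) (tau'_tuple p f r A (s' j' 3)) j' \<le> tup_shift p (f * r) (tau'_tuple p f r A (s' j' 2)) j'"
    unfolding s' using permutes_compose[OF sp \<sigma>p] step[OF o1] step[OF o2] by simp
qed

end
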